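(* Let $d,s,n$ be positive integers, $f_0^*:\{\pm1\}^s\to\mathbb R$, $S^*\subset[d]$ with $|S^*|=s$, $f^*(\mathbf x)=f_0^*(\mathbf x_{S^*})$, and let $\mathcal D_n=\{(\mathbf X_i,Y_i)\}_{i=1}^n$ with $\mathbf X_i$ i.i.d. uniform on $\{\pm1\}^d$, $Y_i=f^*(\mathbf X_i)+\varepsilon_i$, $\varepsilon_i$ i.i.d. zero-mean independent of the covariates, and assume $|Y|\le M$ almost surely. Let $\hat f(\cdot;\mathcal D_n,\Theta)=\frac1B\sum_{b=1}^B\tilde f(\cdot;\mathcal D_n,\theta_b)$ be a regression tree ensemble model in which each tree $\tilde f$ is fit with a regression tree algorithm $\mathcal A$ and $\Theta=(\theta_1,\dots,\theta_B)$ has i.i.d. entries independent of the data. Then $\mathfrak R(\hat f,f_0^*,d,n)\ge(1-\kappa\delta)\operatorname{Var}\{f_0^*(\mathbf X)\}$, where $\delta=\max_{\mathbf x}\mathbb P\{J(\mathbf x;\mathcal D_n,\theta_1)\cap S^*\ne\emptyset\}$ and $\kappa=2M/\operatorname{Var}\{f_0^*(\mathbf X)\}^{1/2}$.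
   Context: A cell is a subcube $C=\{\mathbf x:x_j=z_j,\ j\in J(C)\}$, split on $k\notin J(C)$ into $C\cap\{x_k=\pm1\}$. A regression tree model is constant on each leaf of a binary tree obtained by recursively splitting cells starting from $\{\pm1\}^d$; as standing convention each leaf is labeled with the mean response of the (possibly resampled) observations in it. A regression tree algorithm maps data and a random seed to such a model. For a tree, $J(\mathbf x;\mathcal D_n,\theta)$ is the set of split covariates along the root-to-leaf path containing $\mathbf x$. $R(g,f^* )=\mathbb E_{\mathbf X}\{(g(\mathbf X)-f^*(\mathbf X))^2\}$ with $\mathbf X$ uniform; $\mathfrak R(\hat f,f_0^*,d,n)=\mathbb E_{\mathcal D_n,\Theta}R(\hat f(\cdot;\mathcal D_n,\Theta),f^* )$. *)

theory Defs
  imports "HOL-Probability.Probability" "HOL-Library.Multiset"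
begin

text \<open>Points of the hypercube {+-1}^d are encoded as boolean lists of length d
  (True = +1, False = -1); coordinates are indexed 0..d-1.\<close>

definition cube :: "nat \<Rightarrow> bool list set" where
  "cube d = {xs. length xs = d}"

definition restr :: "bool list \<Rightarrow> nat set \<Rightarrow> bool list" where
  "restr x S = map (\<lambda>j. x ! j) (sorted_list_of_set S)"

text \<open>Split structure of a regression tree: Node k l r splits the current cell on
  coordinate k; l is the child x_k = -1 (False), r the child x_k = +1 (True).\<close>
datatype stree = Leaf | Node nat stree stree

fun valid_tree_aux :: "nat \<Rightarrow> nat set \<Rightarrow> stree \<Rightarrow> bool" where
  "valid_tree_aux d J Leaf = True"
| "valid_tree_aux d J (Node k l r) =
     (k < d \<and> k \<notin> J \<and> valid_tree_aux d (insert k J) l \<and> valid_tree_aux d (insert k J) r)"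

definition valid_tree :: "nat \<Rightarrow> stree \<Rightarrow> bool" where
  "valid_tree d t = valid_tree_aux d {} t"

text \<open>Root-to-leaf path of x (identifies the leaf containing x).\<close>
fun leaf_path :: "stree \<Rightarrow> bool list \<Rightarrow> bool list" where
  "leaf_path Leaf x = []"
| "leaf_path (Node k l r) x = (x ! k) # leaf_path (if x ! k then r else l) x"

fun path_splits :: "stree \<Rightarrow> bool list \<Rightarrow> nat set" where
  "path_splits Leaf x = {}"
| "path_splits (Node k l r) x = insert k (path_splits (if x ! k then r else l) x)"

text \<open>Tree model: split structure t plus the multiset W of (resampled) observation indices;
  each leaf is labelled with the mean response of the resampled observations in it
  (0 if the leaf contains none).  Data D i = (X_i, Y_i) for i < n.\<close>
definition tree_pred :: "nat \<Rightarrow> (nat \<Rightarrow> bool list \<times> real) \<Rightarrow> stree \<times> nat multiset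
                          \<Rightarrow> bool list \<Rightarrow> real" where
  "tree_pred n D tw x =
     (let t = fst tw; W = snd tw;
          I = {i \<in> {..<n}. leaf_path t (fst (D i)) = leaf_path t x}
      in (\<Sum>i\<in>I. real (count W i) * snd (D i)) / (\<Sum>i\<in>I. real (count W i)))"

definition ensemble :: "nat \<Rightarrow> nat \<Rightarrow> ((nat \<Rightarrow> bool list \<times> real) \<Rightarrow> 'c \<Rightarrow> stree \<times> nat multiset)
                        \<Rightarrow> (nat \<Rightarrow> bool list \<times> real) \<Rightarrow> (nat \<Rightarrow> 'c) \<Rightarrow> bool list \<Rightarrow> real" where
  "ensemble n B A D \<Theta> x = (\<Sum>b<B. tree_pred n D (A D (\<Theta> b)) x) / real B"

definition obs_law :: "nat \<Rightarrow> (bool list \<Rightarrow> real) \<Rightarrow> real measure \<Rightarrow> (bool list \<times> real) measure" where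
  "obs_law d fstar \<mu> =
     distr (measure_pmf (pmf_of_set (cube d)) \<Otimes>\<^sub>M \<mu>) (count_space UNIV \<Otimes>\<^sub>M borel)
           (\<lambda>(x, e). (x, fstar x + e))"

definition data_law :: "nat \<Rightarrow> nat \<Rightarrow> (bool list \<Rightarrow> real) \<Rightarrow> real measure
                        \<Rightarrow> (nat \<Rightarrow> bool list \<times> real) measure" where
  "data_law n d fstar \<mu> = (\<Pi>\<^sub>M i\<in>{..<n}. obs_law d fstar \<mu>)"

definition seed_law :: "nat \<Rightarrow> 'c measure \<Rightarrow> (nat \<Rightarrow> 'c) measure" where
  "seed_law B \<nu> = (\<Pi>\<^sub>M b\<in>{..<B}. \<nu>)"

definition risk :: "nat \<Rightarrow> (bool list \<Rightarrow> real) \<Rightarrow> (bool list \<Rightarrow> real) \<Rightarrow> real" where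
  "risk d g fstar = measure_pmf.expectation (pmf_of_set (cube d)) (\<lambda>x. (g x - fstar x)\<^sup>2)"

end

theory Submission
  imports Defs
begin


lemma nth_beyond: "length xs = length ys \<Longrightarrow> length xs \<le> j \<Longrightarrow> xs ! j = ys ! j"
proof (induction xs arbitrary: ys j)
  case Nil then show ?case by simp
next
  case (Cons a xs)
  then obtain b ys' where ys: "ys = b # ys'" by (cases ys) auto
  from Cons obtain j' where j: "j = Suc j'" by (cases j) auto
  have "xs ! j' = ys' ! j'" using Cons.IH[of ys' j'] Cons.prems ys j by simp
  then show ?case using ys j by simp
qed

definition fib :: "nat \<Rightarrow> nat set \<Rightarrow> bool list \<Rightarrow> bool list set" where
  "fib d S y = {x \<in> cube d. \<forall>j<d. j \<notin> S \<longrightarrow> x ! j = y ! j}"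

lemma fib_all: assumes "x \<in> fib d S y" "y \<in> cube d" "j \<notin> S" shows "x ! j = y ! j"
proof (cases "j < d")
  case True then show ?thesis using assms unfolding fib_def by auto
next
  case False
  have x: "x \<in> fib d S y" and y: "y \<in> cube d" using assms by auto
  then have "length x = length y" "length x = d" unfolding fib_def cube_def by auto
  then show ?thesis using False nth_beyond[of x y j] by auto
qed

lemma fib_sym: "x \<in> cube d \<Longrightarrow> y \<in> cube d \<Longrightarrow> x \<in> fib d S y \<longleftrightarrow> y \<in> fib d S x"
  unfolding fib_def by auto

lemma fib_self: "y \<in> cube d \<Longrightarrow> y \<in> fib d S y"
  unfolding fib_def by auto

lemma finite_cube: "finite (cube d)"
proof -
  have "cube d = {xs. set xs \<subseteq> (UNIV::bool set) \<and> length xs = d}" unfolding cube_def by auto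
  then show ?thesis using finite_lists_length_eq[of "UNIV::bool set" d] by simp
qed

lemma card_cube: "card (cube d) = 2 ^ d"
proof -
  have "cube d = {xs. set xs \<subseteq> (UNIV::bool set) \<and> length xs = d}" unfolding cube_def by auto
  then show ?thesis using card_lists_length_eq[of "UNIV::bool set" d] by simp
qed

lemma cube_ne: "cube d \<noteq> {}"
  unfolding cube_def by (auto intro: exI[of _ "replicate d True"])

lemma restr_bij:
  assumes S: "S \<subseteq> {..<d}" and y: "y \<in> cube d"
  shows "bij_betw (\<lambda>x. restr x S) (fib d S y) (cube (card S))"
proof -
  have fS: "finite S" using S finite_subset by blast
  define L where "L = sorted_list_of_set S"
  have dL: "distinct L" and lL: "length L = card S" and sL: "set L = S"
    using fS by (auto simp: L_def)
  have rn: "restr x S ! k = x ! (L ! k)" if "k < card S" for x k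
    using that lL unfolding restr_def L_def[symmetric] by simp
  have lr: "length (restr x S) = card S" for x
    using lL unfolding restr_def L_def[symmetric] by simp
  show ?thesis
  proof (rule bij_betw_imageI)
    show "inj_on (\<lambda>x. restr x S) (fib d S y)"
    proof (rule inj_onI)
      fix x x' assume x: "x \<in> fib d S y" and x': "x' \<in> fib d S y" and eq: "restr x S = restr x' S"
      show "x = x'"
      proof (rule nth_equalityI)
        show "length x = length x'" using x x' by (simp add: fib_def cube_def)
        fix j assume "j < length x"
        show "x ! j = x' ! j"
        proof (cases "j \<in> S")
          case True
          then obtain k where k: "k < length L" "L ! k = j" using sL by (metis in_set_conv_nth)
          then show ?thesis using eq rn[of k x] rn[of k x'] lL by simp
        next
          case False
          then show ?thesis using fib_all[OF x y] fib_all[OF x' y] by simp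
        qed
      qed
    qed
    show "(\<lambda>x. restr x S) ` fib d S y = cube (card S)"
    proof
      show "(\<lambda>x. restr x S) ` fib d S y \<subseteq> cube (card S)" using lr by (auto simp: cube_def)
      show "cube (card S) \<subseteq> (\<lambda>x. restr x S) ` fib d S y"
      proof
        fix z assume z: "z \<in> cube (card S)"
        define pos where "pos = inv_into {..<card S} (nth L)"
        have injL: "inj_on (nth L) {..<card S}" using dL lL by (simp add: inj_on_nth)
        define x where "x = map (\<lambda>j. if j \<in> S then z ! pos j else y ! j) [0..<d]"
        have "x \<in> fib d S y" using y unfolding x_def fib_def cube_def by auto
        moreover have "restr x S = z"
        proof (rule nth_equalityI)
          show "length (restr x S) = length z" using lr z by (simp add: cube_def)
          fix k assume "k < length (restr x S)"
          then have k: "k < card S" using lr by simp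
          have "L ! k \<in> set L" using k lL by simp
          then have Lk: "L ! k \<in> S" using sL by simp
          have "L ! k < d" using Lk S by auto
          moreover have "pos (L ! k) = k" unfolding pos_def using injL k by (simp add: inv_into_f_f)
          ultimately show "restr x S ! k = z ! k" using rn[OF k] Lk by (simp add: x_def)
        qed
        ultimately show "z \<in> (\<lambda>x. restr x S) ` fib d S y" by (metis image_eqI)
      qed
    qed
  qed
qed

lemma sum_fib:
  fixes h \<phi> :: "bool list \<Rightarrow> real"
  assumes S: "S \<subseteq> {..<d}"
    and hinv: "\<And>x y. x \<in> cube d \<Longrightarrow> y \<in> fib d S x \<Longrightarrow> h y = h x"
  shows "real (card (cube (card S))) * (\<Sum>x\<in>cube d. h x * \<phi> (restr x S))
         = (\<Sum>x\<in>cube d. h x) * (\<Sum>z\<in>cube (card S). \<phi> z)"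
proof -
  have A: "(\<Sum>y\<in>fib d S x. h y * \<phi> (restr y S)) = h x * (\<Sum>z\<in>cube (card S). \<phi> z)"
    if x: "x \<in> cube d" for x
  proof -
    have "(\<Sum>y\<in>fib d S x. h y * \<phi> (restr y S)) = (\<Sum>y\<in>fib d S x. h x * \<phi> (restr y S))"
      using hinv[OF x] by (intro sum.cong) auto
    also have "\<dots> = h x * (\<Sum>y\<in>fib d S x. \<phi> (restr y S))" by (simp add: sum_distrib_left)
    also have "(\<Sum>y\<in>fib d S x. \<phi> (restr y S)) = (\<Sum>z\<in>cube (card S). \<phi> z)"
      using sum.reindex_bij_betw[OF restr_bij[OF S x], of \<phi>] .
    finally show ?thesis .
  qed
  have cf: "card (fib d S y) = card (cube (card S))" if "y \<in> cube d" for y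
    using bij_betw_same_card[OF restr_bij[OF S that]] .
  have fibc: "fib d S x = {y. y \<in> cube d \<and> (\<forall>j<d. j \<notin> S \<longrightarrow> y ! j = x ! j)}" for x
    unfolding fib_def by auto
  have "(\<Sum>x\<in>cube d. \<Sum>y\<in>fib d S x. h y * \<phi> (restr y S))
      = (\<Sum>y\<in>cube d. \<Sum>x\<in>{x. x \<in> cube d \<and> (\<forall>j<d. j \<notin> S \<longrightarrow> y ! j = x ! j)}. h y * \<phi> (restr y S))"
    unfolding fibc by (rule sum.swap_restrict[OF finite_cube finite_cube])
  also have "\<dots> = (\<Sum>y\<in>cube d. real (card (cube (card S))) * (h y * \<phi> (restr y S)))"
  proof (rule sum.cong[OF refl])
    fix y assume y: "y \<in> cube d"
    have "{x. x \<in> cube d \<and> (\<forall>j<d. j \<notin> S \<longrightarrow> y ! j = x ! j)} = fib d S y"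
      unfolding fib_def by auto
    then show "(\<Sum>x\<in>{x. x \<in> cube d \<and> (\<forall>j<d. j \<notin> S \<longrightarrow> y ! j = x ! j)}. h y * \<phi> (restr y S))
        = real (card (cube (card S))) * (h y * \<phi> (restr y S))"
      using cf[OF y] by simp
  qed
  finally have "real (card (cube (card S))) * (\<Sum>x\<in>cube d. h x * \<phi> (restr x S))
      = (\<Sum>x\<in>cube d. h x * (\<Sum>z\<in>cube (card S). \<phi> z))"
    using A by (simp add: sum_distrib_left)
  then show ?thesis by (simp add: sum_distrib_right)
qed



lemma path_inv:
  assumes "\<forall>j. j \<notin> S \<longrightarrow> x ! j = y ! j" and "path_splits t x \<inter> S = {}"
  shows "leaf_path t y = leaf_path t x \<and> path_splits t y = path_splits t x"
  using assms(2)
proof (induction t)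
  case Leaf then show ?case by simp
next
  case (Node k l r)
  have kS: "k \<notin> S" using Node.prems by simp
  then have xy: "y ! k = x ! k" using assms(1) by simp
  show ?case
  proof (cases "x ! k")
    case True
    then have "path_splits r x \<inter> S = {}" using Node.prems by simp
    then show ?thesis using Node.IH(2) True xy by simp
  next
    case False
    then have "path_splits l x \<inter> S = {}" using Node.prems by simp
    then show ?thesis using Node.IH(1) False xy by simp
  qed
qed

lemma tree_pred_inv:
  "leaf_path (fst tw) y = leaf_path (fst tw) x \<Longrightarrow> tree_pred n D tw y = tree_pred n D tw x"
  unfolding tree_pred_def Let_def by simp

lemma tree_bound:
  assumes M: "M \<ge> 0" and Y: "\<forall>i<n. \<bar>snd (D i)\<bar> \<le> M"
  shows "\<bar>tree_pred n D tw x\<bar> \<le> M"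
proof -
  define I where "I = {i \<in> {..<n}. leaf_path (fst tw) (fst (D i)) = leaf_path (fst tw) x}"
  define w where "w i = real (count (snd tw) i)" for i
  have tp: "tree_pred n D tw x = (\<Sum>i\<in>I. w i * snd (D i)) / (\<Sum>i\<in>I. w i)"
    unfolding tree_pred_def Let_def I_def w_def by (rule refl)
  have w0: "w i \<ge> 0" for i unfolding w_def by simp
  have "\<bar>\<Sum>i\<in>I. w i * snd (D i)\<bar> \<le> (\<Sum>i\<in>I. \<bar>w i * snd (D i)\<bar>)" by (rule sum_abs)
  also have "\<dots> \<le> (\<Sum>i\<in>I. w i * M)"
  proof (rule sum_mono)
    fix i assume "i \<in> I"
    then have "\<bar>snd (D i)\<bar> \<le> M" using Y unfolding I_def by auto
    then show "\<bar>w i * snd (D i)\<bar> \<le> w i * M" using w0[of i] by (simp add: abs_mult mult_left_mono)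
  qed
  also have "\<dots> = (\<Sum>i\<in>I. w i) * M" by (rule sum_distrib_right[symmetric])
  finally have num: "\<bar>\<Sum>i\<in>I. w i * snd (D i)\<bar> \<le> (\<Sum>i\<in>I. w i) * M" .
  have den: "(\<Sum>i\<in>I. w i) \<ge> 0" by (rule sum_nonneg) (rule w0)
  show ?thesis
  proof (cases "(\<Sum>i\<in>I. w i) = 0")
    case True then have "tree_pred n D tw x = 0" using tp by simp
    then show ?thesis using M by simp
  next
    case False
    then have pos: "(\<Sum>i\<in>I. w i) > 0" using den by linarith
    have "\<bar>(\<Sum>i\<in>I. w i * snd (D i)) / (\<Sum>i\<in>I. w i)\<bar> = \<bar>\<Sum>i\<in>I. w i * snd (D i)\<bar> / (\<Sum>i\<in>I. w i)"
      using pos by (simp add: abs_divide)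
    also have "\<dots> \<le> M" unfolding pos_divide_le_eq[OF pos] using num by (simp add: mult.commute)
    finally show ?thesis using tp by simp
  qed
qed



lemma pointwise:
  fixes T :: "nat \<Rightarrow> bool list \<Rightarrow> real" and Ev :: "nat \<Rightarrow> bool list \<Rightarrow> bool"
    and f0 :: "bool list \<Rightarrow> real"
  assumes S: "S \<subseteq> {..<d}" and B: "B > 0" and M: "M \<ge> 0"
    and Tb: "\<And>b x. b < B \<Longrightarrow> \<bar>T b x\<bar> \<le> M"
    and inv: "\<And>b x y. b < B \<Longrightarrow> x \<in> cube d \<Longrightarrow> y \<in> fib d S x \<Longrightarrow> \<not> Ev b x \<Longrightarrow>
                 \<not> Ev b y \<and> T b y = T b x"
    and m0_def: "m0 = (\<Sum>z\<in>cube (card S). f0 z) / real (card (cube (card S)))"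
    and V_def: "V = (\<Sum>z\<in>cube (card S). (f0 z - m0)\<^sup>2) / real (card (cube (card S)))"
    and v_def: "v = (\<lambda>x. f0 (restr x S) - m0)"
  shows "(\<Sum>x\<in>cube d. ((\<Sum>b<B. T b x) / real B - f0 (restr x S))\<^sup>2) / real (card (cube d))
         \<ge> V - 2 * M / real B * (\<Sum>b<B. (\<Sum>x\<in>cube d. of_bool (Ev b x) * \<bar>v x\<bar>) / real (card (cube d)))"
proof -
  define K where "K = real (card (cube (card S)))"
  define N where "N = real (card (cube d))"
  have K0: "K > 0" unfolding K_def using finite_cube cube_ne by (simp add: card_gt_0_iff)
  have N0: "N > 0" unfolding N_def using finite_cube cube_ne by (simp add: card_gt_0_iff)
  have sumN: "(\<Sum>x\<in>cube d. (1::real)) = N" unfolding N_def by simp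
  have szero: "(\<Sum>z\<in>cube (card S). f0 z - m0) = 0"
  proof -
    have "(\<Sum>z\<in>cube (card S). f0 z - m0) = (\<Sum>z\<in>cube (card S). f0 z) - K * m0"
      unfolding K_def by (simp add: sum_subtractf)
    also have "K * m0 = (\<Sum>z\<in>cube (card S). f0 z)" unfolding m0_def K_def[symmetric] using K0 by simp
    finally show ?thesis by simp
  qed
  have sv: "(\<Sum>x\<in>cube d. v x) = 0"
  proof -
    have "K * (\<Sum>x\<in>cube d. 1 * (f0 (restr x S) - m0)) = (\<Sum>x\<in>cube d. 1) * (\<Sum>z\<in>cube (card S). f0 z - m0)"
      unfolding K_def by (rule sum_fib[OF S]) simp
    then show ?thesis using K0 szero unfolding v_def by simp
  qed
  have sv2: "(\<Sum>x\<in>cube d. (v x)\<^sup>2) = N * V"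
  proof -
    have "K * (\<Sum>x\<in>cube d. 1 * (f0 (restr x S) - m0)\<^sup>2) = (\<Sum>x\<in>cube d. 1) * (\<Sum>z\<in>cube (card S). (f0 z - m0)\<^sup>2)"
      unfolding K_def by (rule sum_fib[OF S]) simp
    then have "K * (\<Sum>x\<in>cube d. (v x)\<^sup>2) = N * (K * V)"
      unfolding v_def V_def K_def[symmetric] sumN using K0 by simp
    then show ?thesis using K0 by simp
  qed
  have tb: "(\<Sum>x\<in>cube d. T b x * v x) \<le> M * (\<Sum>x\<in>cube d. of_bool (Ev b x) * \<bar>v x\<bar>)"
    if b: "b < B" for b
  proof -
    define h where "h x = (if Ev b x then 0 else T b x)" for x
    have hinv: "h y = h x" if x: "x \<in> cube d" and y: "y \<in> fib d S x" for x y
    proof (cases "Ev b x")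
      case False then show ?thesis using inv[OF b x y] unfolding h_def by simp
    next
      case True
      have yc: "y \<in> cube d" using y unfolding fib_def by simp
      have "x \<in> fib d S y" using fib_sym[OF x yc] y by simp
      then have "Ev b y" using inv[OF b yc] True by blast
      then show ?thesis using True unfolding h_def by simp
    qed
    have "K * (\<Sum>x\<in>cube d. h x * (f0 (restr x S) - m0)) = (\<Sum>x\<in>cube d. h x) * (\<Sum>z\<in>cube (card S). f0 z - m0)"
      unfolding K_def by (rule sum_fib[OF S]) (rule hinv)
    then have h0: "(\<Sum>x\<in>cube d. h x * v x) = 0" using K0 szero unfolding v_def by simp
    have split: "T b x * v x = h x * v x + of_bool (Ev b x) * (T b x * v x)" for x
      unfolding h_def by simp
    have "(\<Sum>x\<in>cube d. T b x * v x) = (\<Sum>x\<in>cube d. h x * v x) + (\<Sum>x\<in>cube d. of_bool (Ev b x) * (T b x * v x))"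
    proof -
      have "(\<Sum>x\<in>cube d. T b x * v x) = (\<Sum>x\<in>cube d. h x * v x + of_bool (Ev b x) * (T b x * v x))"
        by (rule sum.cong[OF refl]) (rule split)
      also have "\<dots> = (\<Sum>x\<in>cube d. h x * v x) + (\<Sum>x\<in>cube d. of_bool (Ev b x) * (T b x * v x))"
        by (rule sum.distrib)
      finally show ?thesis .
    qed
    also have "\<dots> = (\<Sum>x\<in>cube d. of_bool (Ev b x) * (T b x * v x))" using h0 by simp
    also have "\<dots> \<le> (\<Sum>x\<in>cube d. M * (of_bool (Ev b x) * \<bar>v x\<bar>))"
    proof (rule sum_mono)
      fix x
      have "T b x * v x \<le> \<bar>T b x\<bar> * \<bar>v x\<bar>" by (metis abs_ge_self abs_mult)
      also have "\<dots> \<le> M * \<bar>v x\<bar>" using Tb[OF b] by (simp add: mult_right_mono)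
      finally show "of_bool (Ev b x) * (T b x * v x) \<le> M * (of_bool (Ev b x) * \<bar>v x\<bar>)" by simp
    qed
    also have "\<dots> = M * (\<Sum>x\<in>cube d. of_bool (Ev b x) * \<bar>v x\<bar>)" by (simp add: sum_distrib_left)
    finally show ?thesis .
  qed
  define ens where "ens x = (\<Sum>b<B. T b x) / real B" for x
  have ensv: "(\<Sum>x\<in>cube d. ens x * v x) = (\<Sum>b<B. \<Sum>x\<in>cube d. T b x * v x) / real B"
    unfolding ens_def by (simp add: sum_divide_distrib sum_distrib_right sum.swap[of _ "cube d"])
  have ensle: "(\<Sum>x\<in>cube d. ens x * v x) \<le> M / real B * (\<Sum>b<B. \<Sum>x\<in>cube d. of_bool (Ev b x) * \<bar>v x\<bar>)"
  proof -
    have "(\<Sum>b<B. \<Sum>x\<in>cube d. T b x * v x) \<le> (\<Sum>b<B. M * (\<Sum>x\<in>cube d. of_bool (Ev b x) * \<bar>v x\<bar>))"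
      by (rule sum_mono) (rule tb, simp)
    then have "(\<Sum>b<B. \<Sum>x\<in>cube d. T b x * v x) / real B \<le> (\<Sum>b<B. M * (\<Sum>x\<in>cube d. of_bool (Ev b x) * \<bar>v x\<bar>)) / real B"
      by (rule divide_right_mono) simp
    also have "\<dots> = M / real B * (\<Sum>b<B. \<Sum>x\<in>cube d. of_bool (Ev b x) * \<bar>v x\<bar>)"
      by (simp add: sum_distrib_left[symmetric])
    finally show ?thesis unfolding ensv .
  qed
  have pw: "(ens x - f0 (restr x S))\<^sup>2 \<ge> - 2 * (ens x * v x) + 2 * m0 * v x + (v x)\<^sup>2" for x
  proof -
    have "(ens x - f0 (restr x S))\<^sup>2 = (ens x - m0)\<^sup>2 - 2 * (ens x * v x) + 2 * m0 * v x + (v x)\<^sup>2"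
      unfolding v_def by (simp add: power2_eq_square algebra_simps)
    then show ?thesis by simp
  qed
  have "(\<Sum>x\<in>cube d. (ens x - f0 (restr x S))\<^sup>2) \<ge> (\<Sum>x\<in>cube d. - 2 * (ens x * v x) + 2 * m0 * v x + (v x)\<^sup>2)"
    by (rule sum_mono) (rule pw)
  also have "(\<Sum>x\<in>cube d. - 2 * (ens x * v x) + 2 * m0 * v x + (v x)\<^sup>2)
      = (\<Sum>x\<in>cube d. - 2 * (ens x * v x)) + (\<Sum>x\<in>cube d. 2 * m0 * v x) + (\<Sum>x\<in>cube d. (v x)\<^sup>2)"
    by (simp only: sum.distrib)
  also have "\<dots> = - 2 * (\<Sum>x\<in>cube d. ens x * v x) + 2 * m0 * (\<Sum>x\<in>cube d. v x) + (\<Sum>x\<in>cube d. (v x)\<^sup>2)"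
    by (simp only: sum_distrib_left)
  finally have main: "(\<Sum>x\<in>cube d. (ens x - f0 (restr x S))\<^sup>2)
      \<ge> N * V - 2 * M / real B * (\<Sum>b<B. \<Sum>x\<in>cube d. of_bool (Ev b x) * \<bar>v x\<bar>)"
    using ensle sv sv2 by simp
  have "(\<Sum>x\<in>cube d. (ens x - f0 (restr x S))\<^sup>2) / N
      \<ge> V - 2 * M / real B * (\<Sum>b<B. \<Sum>x\<in>cube d. of_bool (Ev b x) * \<bar>v x\<bar>) / N"
  proof -
    have "(N * V - 2 * M / real B * (\<Sum>b<B. \<Sum>x\<in>cube d. of_bool (Ev b x) * \<bar>v x\<bar>)) / N
       \<le> (\<Sum>x\<in>cube d. (ens x - f0 (restr x S))\<^sup>2) / N"
      using main N0 by (intro divide_right_mono) auto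
    moreover have "(N * V - 2 * M / real B * (\<Sum>b<B. \<Sum>x\<in>cube d. of_bool (Ev b x) * \<bar>v x\<bar>)) / N
       = V - 2 * M / real B * (\<Sum>b<B. \<Sum>x\<in>cube d. of_bool (Ev b x) * \<bar>v x\<bar>) / N"
      using N0 by (simp add: diff_divide_distrib)
    ultimately show ?thesis by simp
  qed
  note prev = this
  have eq2: "(\<Sum>b<B. (\<Sum>x\<in>cube d. of_bool (Ev b x) * \<bar>v x\<bar>) / N)
     = (\<Sum>b<B. \<Sum>x\<in>cube d. of_bool (Ev b x) * \<bar>v x\<bar>) / N"
    by (rule sum_divide_distrib[symmetric])
  have fin: "(\<Sum>x\<in>cube d. (ens x - f0 (restr x S))\<^sup>2) / N
      \<ge> V - 2 * M / real B * (\<Sum>b<B. (\<Sum>x\<in>cube d. of_bool (Ev b x) * \<bar>v x\<bar>) / N)"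
    unfolding eq2 times_divide_eq_right using prev .
  show ?thesis using fin unfolding ens_def N_def .
qed




instance stree :: countable by countable_datatype

lemma countable_tw: "countable (UNIV :: (stree \<times> nat multiset) set)"
proof -
  have "UNIV = mset ` (UNIV :: nat list set)" using ex_mset by (metis surj_def)
  then have "countable (UNIV :: nat multiset set)" by (metis countable_image countableI_type)
  then show ?thesis by (metis UNIV_Times_UNIV countable_SIGMA countableI_type)
qed

lemma obs_meas:
  assumes "sets MM = sets (count_space UNIV \<Otimes>\<^sub>M (borel :: real measure))"
  shows "fst \<in> measurable MM (count_space UNIV)"
    and "(\<lambda>y. if C (fst y) then w * snd y else (0::real)) \<in> borel_measurable MM"
    and "(\<lambda>y. if C (fst y) then w else (0::real)) \<in> borel_measurable MM"
    and "{y \<in> space MM. \<bar>snd y\<bar> \<le> (M::real)} \<in> sets MM"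
proof -
  have C[measurable]: "(\<lambda>x. C (fst x)) \<in> measurable (count_space UNIV \<Otimes>\<^sub>M (borel :: real measure)) (count_space UNIV)"
    by (rule measurable_compose[OF measurable_fst]) simp
  have eq: "measurable MM N = measurable (count_space UNIV \<Otimes>\<^sub>M (borel :: real measure)) N" for N :: "'b measure"
    by (rule measurable_cong_sets[OF assms refl])
  show "fst \<in> measurable MM (count_space UNIV)" unfolding eq by measurable
  show "(\<lambda>y. if C (fst y) then w * snd y else (0::real)) \<in> borel_measurable MM" unfolding eq by measurable
  show "(\<lambda>y. if C (fst y) then w else (0::real)) \<in> borel_measurable MM" unfolding eq by measurable
  have "{y \<in> space (count_space UNIV \<Otimes>\<^sub>M (borel :: real measure)). \<bar>snd y\<bar> \<le> (M::real)}
        \<in> sets (count_space UNIV \<Otimes>\<^sub>M (borel :: real measure))" by measurable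
  then show "{y \<in> space MM. \<bar>snd y\<bar> \<le> (M::real)} \<in> sets MM"
    using assms sets_eq_imp_space_eq[OF assms] by simp
qed

lemma tree_pred_alt:
  "tree_pred n D tw x =
     (\<Sum>i<n. if leaf_path (fst tw) (fst (D i)) = leaf_path (fst tw) x then real (count (snd tw) i) * snd (D i) else 0)
   / (\<Sum>i<n. if leaf_path (fst tw) (fst (D i)) = leaf_path (fst tw) x then real (count (snd tw) i) else 0)"
  unfolding tree_pred_def Let_def sum.inter_filter[OF finite_lessThan] ..

lemma risk_alt: "risk d g f = (\<Sum>x\<in>cube d. (g x - f x)\<^sup>2) / real (card (cube d))"
  unfolding risk_def using finite_cube cube_ne by (simp add: integral_pmf_of_set)


lemma sum_restr:
  fixes \<phi> :: "bool list \<Rightarrow> real"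
  assumes S: "S \<subseteq> {..<d}"
  shows "real (card (cube (card S))) * (\<Sum>x\<in>cube d. \<phi> (restr x S))
       = real (card (cube d)) * (\<Sum>z\<in>cube (card S). \<phi> z)"
  using sum_fib[OF S, of "\<lambda>_. 1" \<phi>] by simp

lemma ens_bound:
  fixes T :: "nat \<Rightarrow> real"
  assumes "B > 0" "\<And>b. b < B \<Longrightarrow> \<bar>T b\<bar> \<le> M"
  shows "\<bar>(\<Sum>b<B. T b) / real B\<bar> \<le> M"
proof -
  have "\<bar>\<Sum>b<B. T b\<bar> \<le> (\<Sum>b<B. \<bar>T b\<bar>)" by (rule sum_abs)
  also have "\<dots> \<le> (\<Sum>b<B. M)" by (rule sum_mono) (simp add: assms(2))
  also have "\<dots> = real B * M" by simp
  finally have "\<bar>\<Sum>b<B. T b\<bar> \<le> real B * M" .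
  then show ?thesis using assms(1) by (simp add: abs_divide pos_divide_le_eq mult.commute)
qed

lemma risk_bound:
  fixes e f :: "bool list \<Rightarrow> real"
  assumes M: "M \<ge> 0" and e: "\<And>x. \<bar>e x\<bar> \<le> M"
  shows "\<bar>(\<Sum>x\<in>cube d. (e x - f x)\<^sup>2) / real (card (cube d))\<bar> \<le> (M + (\<Sum>x\<in>cube d. \<bar>f x\<bar>))\<^sup>2"
proof -
  define C where "C = M + (\<Sum>x\<in>cube d. \<bar>f x\<bar>)"
  have N0: "real (card (cube d)) > 0" using finite_cube cube_ne by (simp add: card_gt_0_iff)
  have each: "(e x - f x)\<^sup>2 \<le> C\<^sup>2" if x: "x \<in> cube d" for x
  proof -
    have "\<bar>f x\<bar> \<le> (\<Sum>x\<in>cube d. \<bar>f x\<bar>)"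
      by (rule member_le_sum[OF x]) (simp_all add: finite_cube)
    then have "\<bar>e x - f x\<bar> \<le> C" using e[of x] unfolding C_def by linarith
    then have "\<bar>e x - f x\<bar>\<^sup>2 \<le> C\<^sup>2" by (rule power_mono) simp
    then show ?thesis by simp
  qed
  have "(\<Sum>x\<in>cube d. (e x - f x)\<^sup>2) \<le> (\<Sum>x\<in>cube d. C\<^sup>2)" by (rule sum_mono) (rule each)
  also have "\<dots> = real (card (cube d)) * C\<^sup>2" by simp
  finally have "(\<Sum>x\<in>cube d. (e x - f x)\<^sup>2) / real (card (cube d)) \<le> C\<^sup>2"
    using N0 by (simp add: pos_divide_le_eq mult.commute)
  moreover have "(\<Sum>x\<in>cube d. (e x - f x)\<^sup>2) / real (card (cube d)) \<ge> 0"
    by (simp add: sum_nonneg)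
  ultimately show ?thesis unfolding C_def by simp
qed

theorem lemma4:
  fixes d s n B :: nat
    and M :: real
    and f0 fstar :: "bool list \<Rightarrow> real"
    and S :: "nat set"
    and \<mu> :: "real measure"
    and \<nu> :: "'c measure"
    and A :: "(nat \<Rightarrow> bool list \<times> real) \<Rightarrow> 'c \<Rightarrow> stree \<times> nat multiset"
  assumes "d > 0" and "s > 0" and "n > 0" and "B > 0"
    and "S \<subseteq> {..<d}" and "card S = s"
    and "\<And>x. fstar x = f0 (restr x S)"
    and "prob_space \<mu>" and "sets \<mu> = sets borel"
    and "integrable \<mu> (\<lambda>e. e)" and "(\<integral>e. e \<partial>\<mu>) = 0"
    and "AE e in \<mu>. \<forall>x\<in>cube d. \<bar>fstar x + e\<bar> \<le> M"
    and "prob_space \<nu>"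
    and "\<And>D \<theta>. valid_tree d (fst (A D \<theta>))"
    and "(\<lambda>(D, \<theta>). A D \<theta>) \<in> measurable (data_law n d fstar \<mu> \<Otimes>\<^sub>M \<nu>) (count_space UNIV)"
  shows
    "(\<integral>p. risk d (ensemble n B A (fst p) (snd p)) fstar
         \<partial>(data_law n d fstar \<mu> \<Otimes>\<^sub>M seed_law B \<nu>))
     \<ge> (1 - (2 * M / sqrt (measure_pmf.variance (pmf_of_set (cube s)) f0))
            * Max ((\<lambda>x. measure (data_law n d fstar \<mu> \<Otimes>\<^sub>M \<nu>)
                          {p \<in> space (data_law n d fstar \<mu> \<Otimes>\<^sub>M \<nu>).
                             path_splits (fst (A (fst p) (snd p))) x \<inter> S \<noteq> {}}) ` cube d))
       * measure_pmf.variance (pmf_of_set (cube s)) f0"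
proof -
  define pm where "pm = measure_pmf (pmf_of_set (cube d))"
  define OL where "OL = obs_law d fstar \<mu>"
  define DL where "DL = data_law n d fstar \<mu>"
  define SL where "SL = seed_law B \<nu>"
  define P where "P = DL \<Otimes>\<^sub>M SL"
  define Q where "Q = DL \<Otimes>\<^sub>M \<nu>"
  have pm: "prob_space pm" unfolding pm_def by (rule prob_space_measure_pmf)
  have setsPM: "sets (pm \<Otimes>\<^sub>M \<mu>) = sets (count_space UNIV \<Otimes>\<^sub>M (borel :: real measure))"
    by (rule sets_pair_measure_cong) (simp_all add: pm_def assms(9))
  have fm[measurable]: "(\<lambda>x. fstar (fst x)) \<in> borel_measurable (count_space UNIV \<Otimes>\<^sub>M (borel :: real measure))"
    by (rule measurable_compose[OF measurable_fst]) simp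
  have mphi: "(\<lambda>(x, e). (x, fstar x + e)) \<in> measurable (pm \<Otimes>\<^sub>M \<mu>) (count_space UNIV \<Otimes>\<^sub>M borel)"
    unfolding measurable_cong_sets[OF setsPM refl] by measurable
  have OLp: "prob_space OL" unfolding OL_def obs_law_def pm_def[symmetric]
    by (rule prob_space.prob_space_distr[OF prob_space_pair[OF pm assms(8)] mphi])
  have setsOL: "sets OL = sets (count_space UNIV \<Otimes>\<^sub>M (borel::real measure))"
    unfolding OL_def obs_law_def by simp
  have DLeq: "DL = (\<Pi>\<^sub>M i\<in>{..<n}. OL)" unfolding DL_def data_law_def OL_def ..
  have SLeq: "SL = (\<Pi>\<^sub>M b\<in>{..<B}. \<nu>)" unfolding SL_def seed_law_def ..
  have DLp: "prob_space DL" unfolding DLeq by (rule prob_space_PiM) (rule OLp)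
  have SLp: "prob_space SL" unfolding SLeq by (rule prob_space_PiM) (rule assms(13))
  have Pp: "prob_space P" unfolding P_def by (rule prob_space_pair[OF DLp SLp])
  have Qp: "prob_space Q" unfolding Q_def by (rule prob_space_pair[OF DLp assms(13)])
  interpret P: prob_space P by (rule Pp)
  have mDi: "(\<lambda>p. fst p i) \<in> measurable P OL" if "i < n" for i
    unfolding P_def DLeq using that
    by (intro measurable_compose[OF measurable_fst measurable_component_singleton]) simp
  have mpi: "(\<lambda>p. (fst p, snd p b)) \<in> measurable P Q" if "b < B" for b
    unfolding P_def Q_def SLeq using that
    by (intro measurable_Pair measurable_compose[OF measurable_snd measurable_component_singleton])
       (simp_all add: measurable_fst)
  have "(\<lambda>(D, \<theta>). A D \<theta>) = (\<lambda>q. A (fst q) (snd q))" by auto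
  then have mA: "(\<lambda>q. A (fst q) (snd q)) \<in> measurable Q (count_space UNIV)"
    using assms(15) unfolding Q_def DL_def by simp
  have mAP: "(\<lambda>p. A (fst p) (snd p b)) \<in> measurable P (count_space UNIV)" if "b < B" for b
    using measurable_compose[OF mpi[OF that] mA] by simp
  have mTtw: "(\<lambda>p. tree_pred n (fst p) tw x) \<in> borel_measurable P" for tw x
  proof -
    have a: "(\<lambda>p. if leaf_path (fst tw) (fst (fst p i)) = leaf_path (fst tw) x
                     then real (count (snd tw) i) * snd (fst p i) else 0) \<in> borel_measurable P" if "i < n" for i
      using measurable_compose[OF mDi[OF that] obs_meas(2)[OF setsOL,
          of "\<lambda>y. leaf_path (fst tw) y = leaf_path (fst tw) x" "real (count (snd tw) i)"]] .
    have b: "(\<lambda>p. if leaf_path (fst tw) (fst (fst p i)) = leaf_path (fst tw) x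
                     then real (count (snd tw) i) else 0) \<in> borel_measurable P" if "i < n" for i
      using measurable_compose[OF mDi[OF that] obs_meas(3)[OF setsOL,
          of "\<lambda>y. leaf_path (fst tw) y = leaf_path (fst tw) x" "real (count (snd tw) i)"]] .
    show ?thesis unfolding tree_pred_alt
      by (intro borel_measurable_divide borel_measurable_sum a b) simp_all
  qed
  have mT: "(\<lambda>p. tree_pred n (fst p) (A (fst p) (snd p b)) x) \<in> borel_measurable P" if "b < B" for b x
    by (rule measurable_compose_countable'[OF mTtw mAP[OF that] countable_tw])
  have mR: "(\<lambda>p. risk d (ensemble n B A (fst p) (snd p)) fstar) \<in> borel_measurable P"
    unfolding risk_alt ensemble_def
    by (intro borel_measurable_divide borel_measurable_sum borel_measurable_power borel_measurable_diff
              mT borel_measurable_const) simp_all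
  interpret mu: prob_space \<mu> by (rule assms(8))
  obtain x0 where x0: "x0 \<in> cube d" using cube_ne by blast
  have M0: "M \<ge> 0"
  proof (rule ccontr)
    assume nM: "\<not> M \<ge> 0"
    have "AE e in \<mu>. False" using assms(12)
    proof eventually_elim
      case (elim e)
      then have "\<bar>fstar x0 + e\<bar> \<le> M" using x0 by blast
      then show False using nM by linarith
    qed
    then show False by simp
  qed
  have pps: "pair_sigma_finite pm \<mu>"
    by (simp add: pair_sigma_finite_def prob_space_imp_sigma_finite pm assms(8))
  have spm: "space (pm \<Otimes>\<^sub>M \<mu>) = space (count_space UNIV \<Otimes>\<^sub>M (borel :: real measure))"
    by (rule sets_eq_imp_space_eq[OF setsPM])
  have AEOL: "AE y in OL. \<bar>snd y\<bar> \<le> M"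
  proof -
    have set1: "{y \<in> space (count_space UNIV \<Otimes>\<^sub>M (borel :: real measure)). \<bar>snd y\<bar> \<le> M}
        \<in> sets (count_space UNIV \<Otimes>\<^sub>M (borel :: real measure))"
      by (rule obs_meas(4)) simp
    have set2: "{z \<in> space (pm \<Otimes>\<^sub>M \<mu>). \<bar>snd ((\<lambda>(x, e). (x, fstar x + e)) z)\<bar> \<le> M} \<in> sets (pm \<Otimes>\<^sub>M \<mu>)"
      unfolding setsPM spm by measurable
    have "AE x in pm. AE e in \<mu>. \<bar>snd ((\<lambda>(x, e). (x, fstar x + e)) (x, e))\<bar> \<le> M"
      unfolding pm_def AE_measure_pmf_iff set_pmf_of_set[OF cube_ne finite_cube]
    proof
      fix x assume x: "x \<in> cube d"
      show "AE e in \<mu>. \<bar>snd ((\<lambda>(x, e). (x, fstar x + e)) (x, e))\<bar> \<le> M"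
        using assms(12) by eventually_elim (use x in auto)
    qed
    then have "AE z in pm \<Otimes>\<^sub>M \<mu>. \<bar>snd ((\<lambda>(x, e). (x, fstar x + e)) z)\<bar> \<le> M"
      by (rule pair_sigma_finite.AE_pair_measure[OF pps set2])
    then show ?thesis
      unfolding OL_def obs_law_def pm_def[symmetric] AE_distr_iff[OF mphi set1] .
  qed
  have AED: "AE D in DL. \<forall>i\<in>{..<n}. \<bar>snd (D i)\<bar> \<le> M"
  proof (rule AE_finite_allI)
    fix i assume "i \<in> {..<n}"
    then show "AE D in DL. \<bar>snd (D i)\<bar> \<le> M"
      unfolding DLeq using AE_PiM_component[of "{..<n}" "\<lambda>_. OL" i "\<lambda>y. \<bar>snd y\<bar> \<le> M"] OLp AEOL by simp
  qed simp
  have AEP: "AE p in P. \<forall>i\<in>{..<n}. \<bar>snd (fst p i)\<bar> \<le> M"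
  proof -
    have dd: "distr P DL fst = DL" unfolding P_def by (rule prob_space.distr_pair_fst[OF SLp])
    have "AE D in distr P DL fst. \<forall>i\<in>{..<n}. \<bar>snd (D i)\<bar> \<le> M" by (subst dd) (rule AED)
    then show ?thesis by (rule AE_distrD[OF measurable_fst[of DL SL, folded P_def]])
  qed
  define K where "K = real (card (cube s))"
  define N where "N = real (card (cube d))"
  define m0 where "m0 = (\<Sum>z\<in>cube s. f0 z) / K"
  define Var where "Var = (\<Sum>z\<in>cube s. (f0 z - m0)\<^sup>2) / K"
  define v where "v x = f0 (restr x S) - m0" for x
  have K0: "K > 0" unfolding K_def using finite_cube cube_ne by (simp add: card_gt_0_iff)
  have N0: "N > 0" unfolding N_def using finite_cube cube_ne by (simp add: card_gt_0_iff)
  have Var_eq: "measure_pmf.variance (pmf_of_set (cube s)) f0 = Var"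
    unfolding Var_def m0_def K_def by (simp add: integral_pmf_of_set[OF cube_ne finite_cube])
  have Var0: "Var \<ge> 0" unfolding Var_def using K0 by (simp add: sum_nonneg)
  have sv2: "(\<Sum>x\<in>cube d. (v x)\<^sup>2) = N * Var"
  proof -
    have "K * (\<Sum>x\<in>cube d. (f0 (restr x S) - m0)\<^sup>2) = N * (\<Sum>z\<in>cube s. (f0 z - m0)\<^sup>2)"
      using sum_restr[OF assms(5), of "\<lambda>z. (f0 z - m0)\<^sup>2"] unfolding K_def N_def assms(6) .
    then show ?thesis using K0 unfolding v_def Var_def by (simp add: field_simps)
  qed
  have absv: "(\<Sum>x\<in>cube d. \<bar>v x\<bar>) / N \<le> sqrt Var"
  proof (rule real_le_rsqrt)
    have "(\<Sum>x\<in>cube d. \<bar>v x\<bar>)\<^sup>2 \<le> (\<Sum>x\<in>cube d. \<bar>v x\<bar>\<^sup>2) * card (cube d)"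
      by (rule sum_squared_le_sum_of_squares)
    also have "\<dots> = N * Var * N" using sv2 unfolding N_def by simp
    finally have "(\<Sum>x\<in>cube d. \<bar>v x\<bar>)\<^sup>2 \<le> N * Var * N" .
    then show "((\<Sum>x\<in>cube d. \<bar>v x\<bar>) / N)\<^sup>2 \<le> Var"
      using N0 by (simp add: power_divide pos_divide_le_eq power2_eq_square mult.commute mult.left_commute)
  qed
  define Evs where "Evs x = {q \<in> space Q. path_splits (fst (A (fst q) (snd q))) x \<inter> S \<noteq> {}}" for x
  have Evs_sets: "Evs x \<in> sets Q" for x
  proof -
    have "Evs x = (\<lambda>q. A (fst q) (snd q)) -` {tw. path_splits (fst tw) x \<inter> S \<noteq> {}} \<inter> space Q"
      unfolding Evs_def by auto
    also have "\<dots> \<in> sets Q" by (rule measurable_sets[OF mA]) simp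
    finally show ?thesis .
  qed
  define pre where "pre b x = (\<lambda>p. (fst p, snd p b)) -` Evs x \<inter> space P" for b x
  have pre_sets: "pre b x \<in> sets P" if "b < B" for b x
    unfolding pre_def by (rule measurable_sets[OF mpi[OF that] Evs_sets])
  have distrQ: "distr P Q (\<lambda>p. (fst p, snd p b)) = Q" if b: "b < B" for b
  proof -
    have mc: "(\<lambda>\<Theta>. \<Theta> b) \<in> measurable SL \<nu>" unfolding SLeq
      by (rule measurable_component_singleton) (simp add: b)
    have c: "distr SL \<nu> (\<lambda>\<Theta>. \<Theta> b) = \<nu>" unfolding SLeq
      by (rule distr_PiM_component) (simp_all add: assms(13) b)
    have "distr DL DL (\<lambda>x. x) \<Otimes>\<^sub>M distr SL \<nu> (\<lambda>\<Theta>. \<Theta> b)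
        = distr (DL \<Otimes>\<^sub>M SL) (DL \<Otimes>\<^sub>M \<nu>) (\<lambda>(x, y). (x, y b))"
      by (rule pair_measure_distr[OF measurable_ident_sets[OF refl] mc])
         (simp add: c prob_space_imp_sigma_finite assms(13))
    then have e1: "distr (DL \<Otimes>\<^sub>M SL) (DL \<Otimes>\<^sub>M \<nu>) (\<lambda>(x, y). (x, y b)) = DL \<Otimes>\<^sub>M \<nu>"
      unfolding c by simp
    have eqf: "(\<lambda>(x, y). (x, y b)) = (\<lambda>p. (fst p, snd p b))" by auto
    show ?thesis unfolding P_def Q_def eqf[symmetric] by (rule e1)
  qed
  have measQ: "measure P (pre b x) = measure Q (Evs x)" if b: "b < B" for b x
    using measure_distr[OF mpi[OF b] Evs_sets[of x]] unfolding distrQ[OF b] pre_def by simp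
  define \<delta> where "\<delta> = Max ((\<lambda>x. measure Q (Evs x)) ` cube d)"
  have qle: "measure Q (Evs x) \<le> \<delta>" if "x \<in> cube d" for x
    unfolding \<delta>_def by (rule Max_ge) (simp_all add: finite_cube that)
  have \<delta>0: "\<delta> \<ge> 0" using qle[OF x0] measure_nonneg[of Q "Evs x0"] by linarith
  have \<delta>_eq: "Max ((\<lambda>x. measure (data_law n d fstar \<mu> \<Otimes>\<^sub>M \<nu>)
                          {p \<in> space (data_law n d fstar \<mu> \<Otimes>\<^sub>M \<nu>).
                             path_splits (fst (A (fst p) (snd p))) x \<inter> S \<noteq> {}}) ` cube d) = \<delta>"
    unfolding \<delta>_def Evs_def Q_def DL_def ..
  define c where "c = 2 * M / real B"
  define g where "g p = Var - c * (\<Sum>b<B. (\<Sum>x\<in>cube d. indicator (pre b x) p * \<bar>v x\<bar>) / N)" for p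
  have c0: "c \<ge> 0" unfolding c_def using M0 by simp
  have ind_eq: "indicator (pre b x) p
      = (of_bool (path_splits (fst (A (fst p) (snd p b))) x \<inter> S \<noteq> {}) :: real)"
    if p: "p \<in> space P" and b: "b < B" for p b x
  proof -
    have "(fst p, snd p b) \<in> space Q" using measurable_space[OF mpi[OF b] p] .
    then show ?thesis using p unfolding pre_def Evs_def indicator_def by auto
  qed
  have m0eq: "m0 = (\<Sum>z\<in>cube (card S). f0 z) / real (card (cube (card S)))"
    unfolding m0_def K_def assms(6) ..
  have Veq: "Var = (\<Sum>z\<in>cube (card S). (f0 z - m0)\<^sup>2) / real (card (cube (card S)))"
    unfolding Var_def K_def assms(6) ..
  have veq: "v = (\<lambda>x. f0 (restr x S) - m0)" unfolding v_def ..
  have AE_le: "AE p in P. g p \<le> risk d (ensemble n B A (fst p) (snd p)) fstar"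
    using AEP AE_space[of P]
  proof eventually_elim
    case (elim p)
    define T where "T b x = tree_pred n (fst p) (A (fst p) (snd p b)) x" for b x
    define Ev where "Ev b x = (path_splits (fst (A (fst p) (snd p b))) x \<inter> S \<noteq> {})" for b x
    have Tb: "\<bar>T b x\<bar> \<le> M" if "b < B" for b x
      unfolding T_def by (rule tree_bound[OF M0]) (use elim in auto)
    have inv: "\<not> Ev b y \<and> T b y = T b x"
      if "b < B" "x \<in> cube d" "y \<in> fib d S x" "\<not> Ev b x" for b x y
    proof -
      have "\<forall>j. j \<notin> S \<longrightarrow> x ! j = y ! j" using fib_all[OF that(3) that(2)] by simp
      then have "leaf_path (fst (A (fst p) (snd p b))) y = leaf_path (fst (A (fst p) (snd p b))) x \<and>
                 path_splits (fst (A (fst p) (snd p b))) y = path_splits (fst (A (fst p) (snd p b))) x"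
        by (rule path_inv) (use that(4) in \<open>simp add: Ev_def\<close>)
      then have lp: "leaf_path (fst (A (fst p) (snd p b))) y = leaf_path (fst (A (fst p) (snd p b))) x"
        and ps: "path_splits (fst (A (fst p) (snd p b))) y = path_splits (fst (A (fst p) (snd p b))) x"
        by auto
      have "T b y = T b x" unfolding T_def by (rule tree_pred_inv) (use lp in simp)
      moreover have "\<not> Ev b y" using that(4) ps unfolding Ev_def by simp
      ultimately show ?thesis by simp
    qed
    have pw: "(\<Sum>x\<in>cube d. ((\<Sum>b<B. T b x) / real B - f0 (restr x S))\<^sup>2) / real (card (cube d))
         \<ge> Var - 2 * M / real B * (\<Sum>b<B. (\<Sum>x\<in>cube d. of_bool (Ev b x) * \<bar>v x\<bar>) / real (card (cube d)))"
      by (rule pointwise[OF assms(5) assms(4) M0 Tb inv m0eq Veq veq])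
    have r: "risk d (ensemble n B A (fst p) (snd p)) fstar
        = (\<Sum>x\<in>cube d. ((\<Sum>b<B. T b x) / real B - f0 (restr x S))\<^sup>2) / real (card (cube d))"
      unfolding risk_alt ensemble_def assms(7) T_def ..
    have "(\<Sum>b<B. (\<Sum>x\<in>cube d. indicator (pre b x) p * \<bar>v x\<bar>) / N)
        = (\<Sum>b<B. (\<Sum>x\<in>cube d. of_bool (Ev b x) * \<bar>v x\<bar>) / real (card (cube d)))"
      unfolding N_def Ev_def using ind_eq[OF elim(2)] by simp
    then have "g p = Var - 2 * M / real B * (\<Sum>b<B. (\<Sum>x\<in>cube d. of_bool (Ev b x) * \<bar>v x\<bar>) / real (card (cube d)))"
      unfolding g_def c_def by simp
    then show ?case using pw r by simp
  qed
  define Cf where "Cf = (M + (\<Sum>x\<in>cube d. \<bar>fstar x\<bar>))\<^sup>2"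
  have intR: "integrable P (\<lambda>p. risk d (ensemble n B A (fst p) (snd p)) fstar)"
  proof (rule P.integrable_const_bound[OF _ mR])
    show "AE p in P. norm (risk d (ensemble n B A (fst p) (snd p)) fstar) \<le> Cf"
      using AEP
    proof eventually_elim
      case (elim p)
      have "\<bar>ensemble n B A (fst p) (snd p) x\<bar> \<le> M" for x
        unfolding ensemble_def
        by (rule ens_bound[OF assms(4)]) (rule tree_bound[OF M0], use elim in auto)
      then show ?case unfolding risk_alt Cf_def real_norm_def by (rule risk_bound[OF M0])
    qed
  qed
  have intI: "integrable P (\<lambda>p. (\<Sum>x\<in>cube d. indicator (pre b x) p * \<bar>v x\<bar>) / N)" if "b < B" for b
    using that pre_sets by (intro integrable_divide_zero integrable_sum integrable_mult_left integrable_real_indicator)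
       (simp_all add: P.emeasure_finite less_top[symmetric])
  have intC: "integrable P (\<lambda>p. c * (\<Sum>b<B. (\<Sum>x\<in>cube d. indicator (pre b x) p * \<bar>v x\<bar>) / N))"
  proof -
    have "integrable P (\<lambda>p. \<Sum>b<B. (\<Sum>x\<in>cube d. indicator (pre b x) p * \<bar>v x\<bar>) / N)"
      by (rule Bochner_Integration.integrable_sum) (rule intI, simp)
    then show ?thesis by simp
  qed
  have intG: "integrable P g" unfolding g_def using intC by (intro Bochner_Integration.integrable_diff) simp_all
  have intg: "integral\<^sup>L P g = Var - c * (\<Sum>b<B. (\<Sum>x\<in>cube d. measure P (pre b x) * \<bar>v x\<bar>) / N)"
  proof -
    have "integral\<^sup>L P g = Var - c * (\<Sum>b<B. integral\<^sup>L P (\<lambda>p. (\<Sum>x\<in>cube d. indicator (pre b x) p * \<bar>v x\<bar>) / N))"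
      unfolding g_def using intC intI by (simp add: Bochner_Integration.integral_sum P.prob_space)
    also have "\<dots> = Var - c * (\<Sum>b<B. (\<Sum>x\<in>cube d. measure P (pre b x) * \<bar>v x\<bar>) / N)"
    proof -
      have ib: "integral\<^sup>L P (\<lambda>p. (\<Sum>x\<in>cube d. indicator (pre b x) p * \<bar>v x\<bar>) / N)
          = (\<Sum>x\<in>cube d. measure P (pre b x) * \<bar>v x\<bar>) / N" if b: "b < B" for b
      proof -
        have "pre b x \<inter> space P = pre b x" for x unfolding pre_def by auto
        then show ?thesis using pre_sets[OF b]
          by (simp add: Bochner_Integration.integral_sum P.emeasure_finite less_top[symmetric])
      qed
      have "(\<Sum>b<B. integral\<^sup>L P (\<lambda>p. (\<Sum>x\<in>cube d. indicator (pre b x) p * \<bar>v x\<bar>) / N))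
          = (\<Sum>b<B. (\<Sum>x\<in>cube d. measure P (pre b x) * \<bar>v x\<bar>) / N)"
        by (rule sum.cong[OF refl]) (rule ib, simp)
      then show ?thesis by (rule arg_cong[where f="\<lambda>t. Var - c * t"])
    qed
    finally show ?thesis .
  qed
  have lowg: "integral\<^sup>L P g \<ge> Var - 2 * M * \<delta> * sqrt Var"
  proof -
    have "(\<Sum>b<B. (\<Sum>x\<in>cube d. measure P (pre b x) * \<bar>v x\<bar>) / N)
        \<le> (\<Sum>b<B. (\<Sum>x\<in>cube d. \<delta> * \<bar>v x\<bar>) / N)"
    proof (rule sum_mono)
      fix b assume "b \<in> {..<B}"
      then have b: "b < B" by simp
      have "(\<Sum>x\<in>cube d. measure P (pre b x) * \<bar>v x\<bar>) \<le> (\<Sum>x\<in>cube d. \<delta> * \<bar>v x\<bar>)"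
        by (rule sum_mono) (simp add: measQ[OF b] qle mult_right_mono)
      then show "(\<Sum>x\<in>cube d. measure P (pre b x) * \<bar>v x\<bar>) / N \<le> (\<Sum>x\<in>cube d. \<delta> * \<bar>v x\<bar>) / N"
        using N0 by (simp add: divide_right_mono)
    qed
    also have "\<dots> = real B * \<delta> * ((\<Sum>x\<in>cube d. \<bar>v x\<bar>) / N)" by (simp add: sum_distrib_left mult.assoc)
    finally have s1: "(\<Sum>b<B. (\<Sum>x\<in>cube d. measure P (pre b x) * \<bar>v x\<bar>) / N)
        \<le> real B * \<delta> * ((\<Sum>x\<in>cube d. \<bar>v x\<bar>) / N)" .
    have "c * (\<Sum>b<B. (\<Sum>x\<in>cube d. measure P (pre b x) * \<bar>v x\<bar>) / N)
        \<le> c * (real B * \<delta> * ((\<Sum>x\<in>cube d. \<bar>v x\<bar>) / N))"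
      by (rule mult_left_mono[OF s1 c0])
    also have "\<dots> = 2 * M * \<delta> * ((\<Sum>x\<in>cube d. \<bar>v x\<bar>) / N)" unfolding c_def using assms(4) by simp
    also have "\<dots> \<le> 2 * M * \<delta> * sqrt Var"
      by (rule mult_left_mono[OF absv]) (simp add: M0 \<delta>0)
    finally show ?thesis unfolding intg by simp
  qed
  have fin: "Var - 2 * M * \<delta> * sqrt Var = (1 - 2 * M / sqrt Var * \<delta>) * Var"
  proof (cases "Var = 0")
    case True then show ?thesis by simp
  next
    case False
    then have sp: "sqrt Var > 0" using Var0 by simp
    have "Var = sqrt Var * sqrt Var" using Var0 by simp
    then show ?thesis using sp by (simp add: field_simps)
  qed
  have "integral\<^sup>L P (\<lambda>p. risk d (ensemble n B A (fst p) (snd p)) fstar) \<ge> integral\<^sup>L P g"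
    by (rule integral_mono_AE[OF intG intR AE_le])
  then have "integral\<^sup>L P (\<lambda>p. risk d (ensemble n B A (fst p) (snd p)) fstar)
      \<ge> (1 - 2 * M / sqrt Var * \<delta>) * Var" using lowg fin by linarith
  then show ?thesis unfolding Var_eq \<delta>_eq P_def DL_def SL_def .
qed


end
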